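(* Let $A=[a_{ij}]$ be the adjacency matrix of a strongly connected, aperiodic directed graph on $\mathcal X=\{1,\ldots,n\}$ with $a_{nn}=1$, and let $N\ge1$ be such that all entries of $A^N$ are positive. Let $\lambda_A$, $u,v>0$ with $A^Tu=\lambda_Au$, $Av=\lambda_Av$, $\sum_iu_iv_i=1$, $\nu_{RB}(i)=u_iv_i$, $r_{ij}=\frac{v_j}{\lambda_Av_i}a_{ij}$, and $\mathfrak M_{\rm RB}(x_0,\ldots,x_N)=\nu_{RB}(x_0)r_{x_0x_1}\cdots r_{x_{N-1}x_N}$. Let $\mathfrak M^*[\delta_1,\delta_n]$ be the minimizer of $\mathbb D(P\|\mathfrak M_{\rm RB})$ over all probability distributions $P$ on $\mathcal X^{N+1}$ whose marginal at time $0$ is the point mass at node $1$ and whose marginal at time $N$ is the point mass at node $n$. Then $\mathfrak M^*[\delta_1,\delta_n]$ assigns probability $1/(A^N)_{1n}$ to each of the feasible paths of length $N$ from $1$ to $n$, i.e. to each $(x_0,\ldots,x_N)$ with $x_0=1$, $x_N=n$ and $a_{x_tx_{t+1}}=1$ for $t=0,\ldots,N-1$.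
   Context: Relative entropy of a probability distribution $P$ with respect to a nonnegative measure $Q$ on a finite set: $\mathbb D(P\|Q)=\sum_x P(x)\log\frac{P(x)}{Q(x)}$ if $\mathrm{supp}(P)\subseteq\mathrm{supp}(Q)$ (with $0\log0=0$), and $+\infty$ otherwise. *)

theory Defs
  imports Complex_Main "HOL-Library.Extended_Real"
begin

text \<open>Square matrices on the node set {1..n} are represented as functions
  nat => nat => real (only entries with indices in {1..n} matter).\<close>

fun matpow :: "nat \<Rightarrow> (nat \<Rightarrow> nat \<Rightarrow> real) \<Rightarrow> nat \<Rightarrow> nat \<Rightarrow> nat \<Rightarrow> real" where
  "matpow n A 0 i j = (if i = j then 1 else 0)"
| "matpow n A (Suc k) i j = (\<Sum>l\<in>{1..n}. matpow n A k i l * A l j)"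

definition is_adjacency_matrix :: "nat \<Rightarrow> (nat \<Rightarrow> nat \<Rightarrow> real) \<Rightarrow> bool" where
  "is_adjacency_matrix n A \<longleftrightarrow> (\<forall>i\<in>{1..n}. \<forall>j\<in>{1..n}. A i j = 0 \<or> A i j = 1)"

definition strongly_connected :: "nat \<Rightarrow> (nat \<Rightarrow> nat \<Rightarrow> real) \<Rightarrow> bool" where
  "strongly_connected n A \<longleftrightarrow>
     (\<forall>i\<in>{1..n}. \<forall>j\<in>{1..n}. \<exists>k>0. matpow n A k i j > 0)"

definition aperiodic :: "nat \<Rightarrow> (nat \<Rightarrow> nat \<Rightarrow> real) \<Rightarrow> bool" where
  "aperiodic n A \<longleftrightarrow>
     Gcd {k. k > 0 \<and> (\<exists>i\<in>{1..n}. matpow n A k i i > 0)} = 1"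

definition rel_entropy :: "'a set \<Rightarrow> ('a \<Rightarrow> real) \<Rightarrow> ('a \<Rightarrow> real) \<Rightarrow> ereal" where
  "rel_entropy S P Q =
     (if \<forall>x\<in>S. P x \<noteq> 0 \<longrightarrow> Q x \<noteq> 0
      then ereal (\<Sum>x\<in>S. if P x = 0 then 0 else P x * ln (P x / Q x))
      else \<infinity>)"

definition paths :: "nat \<Rightarrow> nat \<Rightarrow> nat list set" where
  "paths n N = {xs. length xs = Suc N \<and> set xs \<subseteq> {1..n}}"

definition is_prob_dist :: "'a set \<Rightarrow> ('a \<Rightarrow> real) \<Rightarrow> bool" where
  "is_prob_dist S P \<longleftrightarrow> (\<forall>x\<in>S. P x \<ge> 0) \<and> (\<Sum>x\<in>S. P x) = 1"

definition bridge_feasible :: "nat \<Rightarrow> nat \<Rightarrow> nat \<Rightarrow> nat \<Rightarrow> (nat list \<Rightarrow> real) \<Rightarrow> bool" where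
  "bridge_feasible n N a b P \<longleftrightarrow> is_prob_dist (paths n N) P \<and>
     (\<forall>y\<in>{1..n}. (\<Sum>xs\<in>{xs\<in>paths n N. xs ! 0 = y}. P xs) = (if y = a then 1 else 0)) \<and>
     (\<forall>y\<in>{1..n}. (\<Sum>xs\<in>{xs\<in>paths n N. xs ! N = y}. P xs) = (if y = b then 1 else 0))"

definition M_RB :: "nat \<Rightarrow> (nat \<Rightarrow> nat \<Rightarrow> real) \<Rightarrow> real \<Rightarrow> (nat \<Rightarrow> real) \<Rightarrow> (nat \<Rightarrow> real)
                    \<Rightarrow> nat list \<Rightarrow> real" where
  "M_RB N A lam u v xs =
     (u (xs ! 0) * v (xs ! 0)) *
     (\<Prod>t<N. v (xs ! Suc t) / (lam * v (xs ! t)) * A (xs ! t) (xs ! Suc t))"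

definition is_bridge_minimizer ::
  "nat \<Rightarrow> nat \<Rightarrow> nat \<Rightarrow> nat \<Rightarrow> (nat list \<Rightarrow> real) \<Rightarrow> (nat list \<Rightarrow> real) \<Rightarrow> bool" where
  "is_bridge_minimizer n N a b M P \<longleftrightarrow> bridge_feasible n N a b P \<and>
     (\<forall>Q. bridge_feasible n N a b Q \<longrightarrow>
          rel_entropy (paths n N) P M \<le> rel_entropy (paths n N) Q M)"

end

theory Submission imports Defs begin

lemma finite_paths: "finite (paths n N)"
proof -
  have "paths n N = {xs. set xs \<subseteq> {1..n} \<and> length xs = Suc N}" unfolding paths_def by auto
  thus ?thesis using finite_lists_length_eq[of "{1..n}" "Suc N"] by simp
qed

lemma gibbs_pt:
  fixes p m :: real assumes "p \<ge> 0" "m > 0"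
  shows "(if p = 0 then 0 else p * ln (p * m)) \<ge> p - 1/m"
    and "(if p = 0 then 0 else p * ln (p * m)) = p - 1/m \<Longrightarrow> p = 1/m"
proof -
  have A: "p * ln (p * m) \<ge> p - 1/m \<and> (p * ln (p * m) = p - 1/m \<longrightarrow> p = 1/m)" if "p > 0"
  proof -
    define y where "y = 1/(p*m)"
    have y: "y > 0" using that assms by (simp add: y_def)
    have l: "ln y = - ln (p*m)" using that assms by (simp add: y_def ln_div)
    have "ln y \<le> y - 1" using ln_le_minus_one[OF y] .
    hence "ln (p*m) \<ge> 1 - y" using l by simp
    hence "p * ln (p*m) \<ge> p * (1 - y)" using that by (simp add: mult_left_mono)
    moreover have "p * (1 - y) = p - 1/m" using that assms by (simp add: y_def field_simps)
    moreover have "p = 1/m" if "p * ln (p * m) = p - 1/m"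
    proof -
      have "p * ln (p*m) = p * (1 - y)" using that \<open>p * (1 - y) = p - 1/m\<close> by simp
      hence "ln (p*m) = 1 - y" using \<open>p > 0\<close> by simp
      hence "ln y = y - 1" using l by simp
      hence "y = 1" using ln_eq_minus_one[OF y] by simp
      thus ?thesis using assms by (simp add: y_def field_simps)
    qed
    ultimately show ?thesis by auto
  qed
  show "(if p = 0 then 0 else p * ln (p * m)) \<ge> p - 1/m"
    using A assms by (cases "p = 0") auto
  show "p = 1/m" if "(if p = 0 then 0 else p * ln (p * m)) = p - 1/m"
    using A assms that by (cases "p = 0") auto
qed

lemma telescope:
  fixes f :: "nat \<Rightarrow> real"
  assumes "\<forall>t\<le>N. f t \<noteq> 0" "lam \<noteq> 0"
  shows "(\<Prod>t<N. f (Suc t) / (lam * f t)) = f N / (f 0 * lam ^ N)"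
  using assms
proof (induction N)
  case 0 thus ?case by simp
next
  case (Suc N)
  hence IH: "(\<Prod>t<N. f (Suc t) / (lam * f t)) = f N / (f 0 * lam ^ N)" by simp
  have "f N \<noteq> 0" "f 0 \<noteq> 0" using Suc.prems by auto
  thus ?case using IH Suc.prems by (simp add: field_simps)
qed

lemma walk_sum:
  assumes "i \<in> {1..n}" "j \<in> {1..n}"
  shows "(\<Sum>xs\<in>{xs\<in>paths n k. xs!0=i \<and> xs!k=j}. \<Prod>t<k. A (xs!t) (xs!Suc t)) = matpow n A k i j"
  using assms(2)
proof (induction k arbitrary: j)
  case 0
  have "{xs\<in>paths n 0. xs!0=i \<and> xs!0=j} = (if i = j then {[i]} else {})"
    using assms(1) by (auto simp: paths_def length_Suc_conv)
  thus ?case by simp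
next
  case (Suc k)
  let ?P = "{ys\<in>paths n k. ys!0=i}"
  let ?W = "\<lambda>k ys. \<Prod>t<k. A (ys!t) (ys!Suc t)"
  have img: "{xs\<in>paths n (Suc k). xs!0=i \<and> xs!Suc k=j} = (\<lambda>ys. ys@[j]) ` ?P"
  proof
    show "(\<lambda>ys. ys@[j]) ` ?P \<subseteq> {xs\<in>paths n (Suc k). xs!0=i \<and> xs!Suc k=j}"
      using Suc.prems by (auto simp: paths_def nth_append)
  next
    show "{xs\<in>paths n (Suc k). xs!0=i \<and> xs!Suc k=j} \<subseteq> (\<lambda>ys. ys@[j]) ` ?P"
    proof
      fix xs assume xs: "xs \<in> {xs\<in>paths n (Suc k). xs!0=i \<and> xs!Suc k=j}"
      hence len: "length xs = Suc (Suc k)" by (simp add: paths_def)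
      have e: "xs = take (Suc k) xs @ [j]"
        using take_Suc_conv_app_nth[of "Suc k" xs] len xs by simp
      have "take (Suc k) xs \<in> ?P" using xs len
        by (auto simp: paths_def dest: in_set_takeD)
      thus "xs \<in> (\<lambda>ys. ys@[j]) ` ?P" using e by blast
    qed
  qed
  have inj: "inj_on (\<lambda>ys. ys@[j]) ?P" by (auto simp: inj_on_def)
  have fin: "finite ?P" using finite_paths[of n k] by simp
  have W: "?W (Suc k) (ys@[j]) = ?W k ys * A (ys!k) j" if "ys \<in> ?P" for ys
  proof -
    have len: "length ys = Suc k" using that by (simp add: paths_def)
    have "?W (Suc k) (ys@[j]) = (\<Prod>t<k. A ((ys@[j])!t) ((ys@[j])!Suc t)) * A ((ys@[j])!k) ((ys@[j])!Suc k)"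
      by simp
    also have "(\<Prod>t<k. A ((ys@[j])!t) ((ys@[j])!Suc t)) = ?W k ys"
      by (rule prod.cong) (auto simp: nth_append len)
    finally show ?thesis by (simp add: nth_append len)
  qed
  have "(\<Sum>xs\<in>{xs\<in>paths n (Suc k). xs!0=i \<and> xs!Suc k=j}. ?W (Suc k) xs)
        = (\<Sum>ys\<in>?P. ?W (Suc k) (ys@[j]))"
    unfolding img using sum.reindex[OF inj] by simp
  also have "\<dots> = (\<Sum>ys\<in>?P. ?W k ys * A (ys!k) j)" using W by (rule sum.cong[OF refl])
  also have "\<dots> = (\<Sum>l\<in>{1..n}. \<Sum>ys\<in>{ys\<in>?P. ys!k = l}. ?W k ys * A (ys!k) j)"
    by (rule sum.group[symmetric]) (use fin in \<open>auto simp: paths_def\<close>)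
  also have "\<dots> = (\<Sum>l\<in>{1..n}. matpow n A k i l * A l j)"
  proof (rule sum.cong[OF refl])
    fix l assume l: "l \<in> {1..n}"
    have "(\<Sum>ys\<in>{ys\<in>?P. ys!k = l}. ?W k ys * A (ys!k) j) = (\<Sum>ys\<in>{ys\<in>paths n k. ys!0=i \<and> ys!k = l}. ?W k ys) * A l j"
      by (simp add: sum_distrib_right conj_ac)
    also have "\<dots> = matpow n A k i l * A l j" using Suc.IH[OF l] by simp
    finally show "(\<Sum>ys\<in>{ys\<in>?P. ys!k = l}. ?W k ys * A (ys!k) j) = matpow n A k i l * A l j" .
  qed
  finally show ?case by simp
qed

theorem proposition5p4:
  fixes n N :: nat and A :: "nat \<Rightarrow> nat \<Rightarrow> real"
    and lam :: real and u v :: "nat \<Rightarrow> real"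
  assumes "n \<ge> 1"
    and "is_adjacency_matrix n A"
    and "strongly_connected n A"
    and "aperiodic n A"
    and "A n n = 1"
    and "N \<ge> 1"
    and "\<forall>i\<in>{1..n}. \<forall>j\<in>{1..n}. matpow n A N i j > 0"
    and "\<forall>i\<in>{1..n}. u i > 0" and "\<forall>i\<in>{1..n}. v i > 0"
    and "\<forall>j\<in>{1..n}. (\<Sum>i\<in>{1..n}. A i j * u i) = lam * u j"
    and "\<forall>i\<in>{1..n}. (\<Sum>j\<in>{1..n}. A i j * v j) = lam * v i"
    and "(\<Sum>i\<in>{1..n}. u i * v i) = 1"
  shows "(\<exists>P. is_bridge_minimizer n N 1 n (M_RB N A lam u v) P) \<and>
         (\<forall>P. is_bridge_minimizer n N 1 n (M_RB N A lam u v) P \<longrightarrow>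
            (\<forall>xs\<in>paths n N. xs ! 0 = 1 \<and> xs ! N = n \<and>
                (\<forall>t<N. A (xs ! t) (xs ! Suc t) = 1) \<longrightarrow>
                P xs = 1 / matpow n A N 1 n))"
proof -
  note adj = assms(2)[unfolded is_adjacency_matrix_def]
  have adj0: "A a b = 0" if "a \<in> {1..n}" "b \<in> {1..n}" "A a b \<noteq> 1" for a b
    using adj that by blast
  have n1: "n \<in> {1..n}" "1 \<in> {1..n}" using assms(1) by auto
  define S0 where "S0 = paths n N"
  define F where "F = {xs\<in>S0. xs!0 = 1 \<and> xs!N = n \<and> (\<forall>t<N. A (xs!t) (xs!Suc t) = 1)}"
  define m where "m = matpow n A N 1 n"
  define M where "M = M_RB N A lam u v"
  define c where "c = u 1 * v n / lam ^ N"
  have finS0: "finite S0" unfolding S0_def by (rule finite_paths)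
  have finF: "finite F" using finS0 unfolding F_def by simp
  have FS0: "F \<subseteq> S0" unfolding F_def by auto
  have m: "m > 0" using assms(7) n1 unfolding m_def by auto
  have lam: "lam > 0"
  proof -
    have "(\<Sum>i\<in>{1..n}. A i n * u i) \<ge> A n n * u n"
      proof (rule member_le_sum)
      fix x assume x: "x \<in> {1..n} - {n}"
      hence x': "x \<in> {1..n}" by blast
      have "A x n = 0 \<or> A x n = 1" using adj x' n1 by blast
      moreover have "u x > 0" using assms(8) x' by blast
      ultimately show "0 \<le> A x n * u x" by auto
    qed (use n1 in auto)
    hence "lam * u n > 0" using assms(10) assms(5) assms(8) n1 by fastforce
    moreover have "u n > 0" using assms(8) n1 by blast
    ultimately show ?thesis by (simp add: zero_less_mult_iff)
  qed
  have c: "c > 0" unfolding c_def using lam assms(8,9) n1 by simp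
  have ent: "xs ! t \<in> {1..n}" if "xs \<in> S0" "t \<le> N" for xs t
    using that unfolding S0_def paths_def by (auto simp: subset_iff)
  have MF: "M xs = c" if "xs \<in> F" for xs
  proof -
    have xs: "xs \<in> S0" "xs!0 = 1" "xs!N = n" "\<forall>t<N. A (xs!t) (xs!Suc t) = 1"
      using that unfolding F_def by auto
    have "M xs = u (xs!0) * v (xs!0) * (\<Prod>t<N. v (xs ! Suc t) / (lam * v (xs ! t)))"
      unfolding M_def M_RB_def using xs(4) by simp
    also have "(\<Prod>t<N. v (xs ! Suc t) / (lam * v (xs ! t))) = v (xs!N) / (v (xs!0) * lam ^ N)"
      by (rule telescope[where f = "\<lambda>t. v (xs!t)"]) (use ent[OF xs(1)] assms(9) lam in \<open>fastforce+\<close>)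
    finally have eq: "M xs = u (xs!0) * v (xs!0) * (v (xs!N) / (v (xs!0) * lam ^ N))" .
    have "v 1 > 0" using assms(9) n1 by blast
    thus ?thesis using eq xs unfolding c_def by simp
  qed
  have MnF: "M xs = 0" if "xs \<in> S0" "xs \<notin> F" "xs!0 = 1" "xs!N = n" for xs
  proof -
    have "\<not> (\<forall>t<N. A (xs!t) (xs!Suc t) = 1)" using that by (simp add: F_def)
    then obtain t where t: "t < N" "A (xs!t) (xs!Suc t) \<noteq> 1" by blast
    have "A (xs!t) (xs!Suc t) = 0" using adj0 ent[OF that(1), of t] ent[OF that(1), of "Suc t"] t by simp
    hence "(\<Prod>t<N. v (xs ! Suc t) / (lam * v (xs ! t)) * A (xs ! t) (xs ! Suc t)) = 0"
      using t(1) by (intro prod_zero) auto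
    thus ?thesis unfolding M_def M_RB_def by simp
  qed
  have cardF: "real (card F) = m"
  proof -
    let ?S = "{xs\<in>paths n N. xs!0=1 \<and> xs!N=n}"
    let ?W = "\<lambda>xs. \<Prod>t<N. A (xs!t) (xs!Suc t)"
    have S: "?S = {xs\<in>S0. xs!0=1 \<and> xs!N=n}" unfolding S0_def by simp
    have finS: "finite ?S" using finS0 S by simp
    have FS: "F \<subseteq> ?S" unfolding F_def S0_def by auto
    have "m = sum ?W ?S" unfolding m_def using walk_sum[OF n1(2) n1(1)] by simp
    also have "\<dots> = sum ?W F + sum ?W (?S - F)" using sum.subset_diff[OF FS finS, of ?W] by (simp add: add.commute)
    also have "sum ?W F = sum (\<lambda>_. 1) F" by (rule sum.cong) (auto simp: F_def)
    also have "sum ?W (?S - F) = 0"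
    proof (rule sum.neutral, rule ballI)
      fix xs assume xs: "xs \<in> ?S - F"
      then obtain t where t: "t < N" "A (xs!t) (xs!Suc t) \<noteq> 1" unfolding F_def S0_def by auto
      have xs0: "xs \<in> S0" using xs S by auto
      have "A (xs!t) (xs!Suc t) = 0" using adj0 ent[OF xs0, of t] ent[OF xs0, of "Suc t"] t by simp
      thus "?W xs = 0" using t(1) by (intro prod_zero) auto
    qed
    finally show ?thesis by simp
  qed
  have supp: "xs!0 = 1 \<and> xs!N = n" if Q: "bridge_feasible n N 1 n Q" and xs: "xs \<in> S0" "Q xs \<noteq> 0" for Q xs
  proof -
    have nn: "\<forall>x\<in>S0. Q x \<ge> 0" using Q unfolding bridge_feasible_def is_prob_dist_def S0_def by auto
    have "xs!0 = 1"
    proof (rule ccontr)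
      assume ne: "xs!0 \<noteq> 1"
      have y: "xs!0 \<in> {1..n}" using ent[OF xs(1), of 0] by simp
      have "(\<Sum>x\<in>{x\<in>S0. x!0 = xs!0}. Q x) = 0" using Q y ne unfolding bridge_feasible_def S0_def by auto
      hence "\<forall>x\<in>{x\<in>S0. x!0 = xs!0}. Q x = 0" using nn finS0 by (subst (asm) sum_nonneg_eq_0_iff) auto
      thus False using xs by auto
    qed
    moreover have "xs!N = n"
    proof (rule ccontr)
      assume ne: "xs!N \<noteq> n"
      have y: "xs!N \<in> {1..n}" using ent[OF xs(1), of N] by simp
      have "(\<Sum>x\<in>{x\<in>S0. x!N = xs!N}. Q x) = 0" using Q y ne unfolding bridge_feasible_def S0_def by auto
      hence "\<forall>x\<in>{x\<in>S0. x!N = xs!N}. Q x = 0" using nn finS0 by (subst (asm) sum_nonneg_eq_0_iff) auto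
      thus False using xs by auto
    qed
    ultimately show ?thesis ..
  qed
  define h where "h = (\<lambda>p::real. if p = 0 then 0 else p * ln (p / c))"
  define g where "g = (\<lambda>p::real. if p = 0 then 0 else p * ln (p * m))"
  have ent_inf: "rel_entropy S0 Q M = \<infinity>"
    if Q: "bridge_feasible n N 1 n Q" and ns: "\<not> (\<forall>x\<in>S0. Q x \<noteq> 0 \<longrightarrow> x \<in> F)" for Q
  proof -
    obtain x where x: "x \<in> S0" "Q x \<noteq> 0" "x \<notin> F" using ns by auto
    have "M x = 0" using MnF[OF x(1) x(3)] supp[OF Q x(1,2)] by simp
    thus ?thesis unfolding rel_entropy_def using x by auto
  qed
  have ent_fin: "rel_entropy S0 Q M = ereal (\<Sum>x\<in>F. h (Q x))"
    if Q: "\<forall>x\<in>S0. Q x \<noteq> 0 \<longrightarrow> x \<in> F" for Q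
  proof -
    have "\<forall>x\<in>S0. Q x \<noteq> 0 \<longrightarrow> M x \<noteq> 0" using Q MF c by auto
    hence "rel_entropy S0 Q M = ereal (\<Sum>x\<in>S0. if Q x = 0 then 0 else Q x * ln (Q x / M x))"
      unfolding rel_entropy_def by simp
    also have "(\<Sum>x\<in>S0. if Q x = 0 then 0 else Q x * ln (Q x / M x)) =
               (\<Sum>x\<in>F. if Q x = 0 then 0 else Q x * ln (Q x / M x))"
      by (rule sum.mono_neutral_right[OF finS0 FS0]) (use Q in auto)
    also have "\<dots> = (\<Sum>x\<in>F. h (Q x))" by (rule sum.cong) (auto simp: h_def MF)
    finally show ?thesis .
  qed
  have hg: "(\<Sum>x\<in>F. h (Q x)) = (\<Sum>x\<in>F. g (Q x)) - ln (m * c)"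
    if nn: "\<forall>x\<in>F. Q x \<ge> 0" and s1: "(\<Sum>x\<in>F. Q x) = 1" for Q
  proof -
    have "h (Q x) = g (Q x) - Q x * ln (m * c)" if "x \<in> F" for x
    proof (cases "Q x = 0")
      case True thus ?thesis by (simp add: h_def g_def)
    next
      case False
      hence p: "Q x > 0" using nn that by force
      have "ln (Q x / c) = ln (Q x * m) - ln (m * c)"
        using p m c by (simp add: ln_div ln_mult)
      hence "Q x * ln (Q x / c) = Q x * ln (Q x * m) - Q x * ln (m * c)" by (simp add: right_diff_distrib)
      thus ?thesis using False by (simp add: h_def g_def)
    qed
    hence "(\<Sum>x\<in>F. h (Q x)) = (\<Sum>x\<in>F. g (Q x) - Q x * ln (m * c))" by (rule sum.cong[OF refl])
    also have "\<dots> = (\<Sum>x\<in>F. g (Q x)) - (\<Sum>x\<in>F. Q x) * ln (m * c)"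
      by (simp add: sum_subtractf sum_distrib_right)
    finally show ?thesis using s1 by simp
  qed
  have gge: "(\<Sum>x\<in>F. g (Q x)) \<ge> 0" and geq: "(\<Sum>x\<in>F. g (Q x)) = 0 \<Longrightarrow> \<forall>x\<in>F. Q x = 1/m"
    if nn: "\<forall>x\<in>F. Q x \<ge> 0" and s1: "(\<Sum>x\<in>F. Q x) = 1" for Q
  proof -
    have "(\<Sum>x\<in>F. Q x - 1/m) = 0" using s1 cardF m by (simp add: sum_subtractf)
    have le: "\<forall>x\<in>F. Q x - 1/m \<le> g (Q x)" using gibbs_pt(1) nn m unfolding g_def by auto
    have d: "(\<Sum>x\<in>F. g (Q x)) = (\<Sum>x\<in>F. g (Q x) - (Q x - 1/m))"
      using \<open>(\<Sum>x\<in>F. Q x - 1/m) = 0\<close> by (simp add: sum_subtractf)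
    show "(\<Sum>x\<in>F. g (Q x)) \<ge> 0" unfolding d using le by (intro sum_nonneg) auto
    assume z: "(\<Sum>x\<in>F. g (Q x)) = 0"
    have s0: "(\<Sum>x\<in>F. g (Q x) - (Q x - 1/m)) = 0" using z d by simp
    have nn': "\<And>x. x \<in> F \<Longrightarrow> 0 \<le> g (Q x) - (Q x - 1/m)" using le by auto
    have "\<forall>x\<in>F. g (Q x) - (Q x - 1/m) = 0"
      using sum_nonneg_0[OF finF nn' s0] by blast
    thus "\<forall>x\<in>F. Q x = 1/m" using gibbs_pt(2) nn m unfolding g_def by auto
  qed
  define U where "U = (\<lambda>xs. if xs \<in> F then 1/m else 0)"
  have sumU: "(\<Sum>x\<in>T. U x) = real (card (T \<inter> F)) / m" if "T \<subseteq> S0" for T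
  proof -
    have fT: "finite T" using finS0 that by (rule finite_subset[rotated])
    have "(\<Sum>x\<in>T. U x) = (\<Sum>x\<in>T \<inter> {x. x \<in> F}. 1/m)"
      unfolding U_def by (simp add: sum.If_cases[OF fT])
    thus ?thesis by simp
  qed
  have Ufeas: "bridge_feasible n N 1 n U"
  proof -
    have "(\<Sum>x\<in>S0. U x) = 1" using sumU[of S0] FS0 cardF m by (simp add: Int_absorb1)
    moreover have "\<forall>y\<in>{1..n}. (\<Sum>xs\<in>{xs\<in>S0. xs ! 0 = y}. U xs) = (if y = 1 then 1 else 0)"
    proof
      fix y assume "y \<in> {1..n}"
      have "{xs\<in>S0. xs ! 0 = y} \<inter> F = (if y = 1 then F else {})" unfolding F_def by auto
      thus "(\<Sum>xs\<in>{xs\<in>S0. xs ! 0 = y}. U xs) = (if y = 1 then 1 else 0)"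
        using sumU[of "{xs\<in>S0. xs ! 0 = y}"] cardF m by auto
    qed
    moreover have "\<forall>y\<in>{1..n}. (\<Sum>xs\<in>{xs\<in>S0. xs ! N = y}. U xs) = (if y = n then 1 else 0)"
    proof
      fix y assume "y \<in> {1..n}"
      have "{xs\<in>S0. xs ! N = y} \<inter> F = (if y = n then F else {})" unfolding F_def by auto
      thus "(\<Sum>xs\<in>{xs\<in>S0. xs ! N = y}. U xs) = (if y = n then 1 else 0)"
        using sumU[of "{xs\<in>S0. xs ! N = y}"] cardF m by auto
    qed
    moreover have "\<forall>x\<in>S0. U x \<ge> 0" using m by (simp add: U_def)
    ultimately show ?thesis unfolding bridge_feasible_def is_prob_dist_def S0_def by simp
  qed
  have sumF: "(\<Sum>x\<in>F. Q x) = 1" "\<forall>x\<in>F. Q x \<ge> 0"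
    if Q: "bridge_feasible n N 1 n Q" and sp: "\<forall>x\<in>S0. Q x \<noteq> 0 \<longrightarrow> x \<in> F" for Q
  proof -
    have "(\<Sum>x\<in>S0. Q x) = 1" using Q unfolding bridge_feasible_def is_prob_dist_def S0_def by simp
    moreover have "(\<Sum>x\<in>S0. Q x) = (\<Sum>x\<in>F. Q x)"
      by (rule sum.mono_neutral_right[OF finS0 FS0]) (use sp in auto)
    ultimately show "(\<Sum>x\<in>F. Q x) = 1" by simp
    show "\<forall>x\<in>F. Q x \<ge> 0" using Q FS0 unfolding bridge_feasible_def is_prob_dist_def S0_def by auto
  qed
  have Usp: "\<forall>x\<in>S0. U x \<noteq> 0 \<longrightarrow> x \<in> F" unfolding U_def by auto
  have gU: "(\<Sum>x\<in>F. g (U x)) = 0" unfolding g_def U_def using m by simp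
  have entU: "rel_entropy S0 U M = ereal (- ln (m * c))"
    using ent_fin[OF Usp] hg[OF sumF(2)[OF Ufeas Usp] sumF(1)[OF Ufeas Usp]] gU by simp
  have lower: "rel_entropy S0 Q M \<ge> ereal (- ln (m * c))" if Q: "bridge_feasible n N 1 n Q" for Q
  proof (cases "\<forall>x\<in>S0. Q x \<noteq> 0 \<longrightarrow> x \<in> F")
    case True
    show ?thesis using ent_fin[OF True] hg[OF sumF(2)[OF Q True] sumF(1)[OF Q True]]
      gge[OF sumF(2)[OF Q True] sumF(1)[OF Q True]] by simp
  next
    case False thus ?thesis using ent_inf[OF Q] by simp
  qed
  have ex: "is_bridge_minimizer n N 1 n M U"
    unfolding is_bridge_minimizer_def using Ufeas lower entU unfolding S0_def by auto
  have uniq: "\<forall>xs\<in>F. P xs = 1/m" if P: "is_bridge_minimizer n N 1 n M P" for P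
  proof -
    have Pf: "bridge_feasible n N 1 n P" using P unfolding is_bridge_minimizer_def by simp
    have le: "rel_entropy S0 P M \<le> ereal (- ln (m * c))"
      using P Ufeas entU unfolding is_bridge_minimizer_def S0_def by auto
    have sp: "\<forall>x\<in>S0. P x \<noteq> 0 \<longrightarrow> x \<in> F"
      using ent_inf[OF Pf] le by (metis ereal_infty_less_eq(1) ereal_less_eq(1) PInfty_neq_ereal(1))
    have "(\<Sum>x\<in>F. g (P x)) = 0"
      using ent_fin[OF sp] le hg[OF sumF(2)[OF Pf sp] sumF(1)[OF Pf sp]]
        gge[OF sumF(2)[OF Pf sp] sumF(1)[OF Pf sp]] by simp
    thus ?thesis using geq[OF sumF(2)[OF Pf sp] sumF(1)[OF Pf sp]] by simp
  qed
  show ?thesis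
  proof
    show "\<exists>P. is_bridge_minimizer n N 1 n (M_RB N A lam u v) P" using ex unfolding M_def by blast
    show "\<forall>P. is_bridge_minimizer n N 1 n (M_RB N A lam u v) P \<longrightarrow>
            (\<forall>xs\<in>paths n N. xs ! 0 = 1 \<and> xs ! N = n \<and>
                (\<forall>t<N. A (xs ! t) (xs ! Suc t) = 1) \<longrightarrow>
                P xs = 1 / matpow n A N 1 n)"
      using uniq unfolding M_def F_def S0_def m_def by auto
  qed
qed

end
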